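(* Let $n\ge k\ge 2$ be integers. If $\mathcal{F}\subseteq\mathbb{Z}_{2^n}$ does not contain a projective $2^{k-1}$-cube, then $|\mathcal{F}|\le |L_1\cup L_2\cup\dots\cup L_{k-1}|$.
   Context: All arithmetic is in $\mathbb{Z}_{2^n}$. For a multiset $S=\{a_1,\dots,a_d\}$ of $d$ (not necessarily distinct) elements of $\mathbb{Z}_{2^n}$, the projective $d$-cube generated by $S$ is the set $\Sigma^*S=\{\sum_{i\in I}a_i \bmod 2^n:\emptyset\ne I\subseteq[d]\}$ (viewed as a set). A set $A\subseteq\mathbb{Z}_{2^n}$ contains a projective $d$-cube if there is a multiset $S$ of size $d$ with $\Sigma^*S\subseteq A$. Layers: for $1\le i\le n$, $L_i=\{x\in\mathbb{Z}_{2^n}: x\equiv 2^{i-1}\pmod{2^i}\}$, and $L_{n+1}=\{0\}$; thus $|L_i|=2^{n-i}$ for $i\le n$. *)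

theory Defs
  imports Main
begin

text \<open>Elements of Z_{2^n} are represented by their canonical residues in {0..<2^n}.
A multiset of d elements is represented by a list of length d.\<close>

definition proj_cube :: "nat \<Rightarrow> nat list \<Rightarrow> nat set" where
  "proj_cube n S = {(\<Sum>i\<in>I. S ! i) mod 2^n | I. I \<subseteq> {..<length S} \<and> I \<noteq> {}}"

definition contains_proj_cube :: "nat \<Rightarrow> nat \<Rightarrow> nat set \<Rightarrow> bool" where
  "contains_proj_cube n d A \<longleftrightarrow>
     (\<exists>S. length S = d \<and> set S \<subseteq> {..<2^n} \<and> proj_cube n S \<subseteq> A)"

definition layer :: "nat \<Rightarrow> nat \<Rightarrow> nat set" where
  "layer n i = (if i = n + 1 then {0}
               else {x. x < 2^n \<and> x mod 2^i = 2^(i-1)})"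

end

theory Submission
  imports Defs "HOL-Number_Theory.Cong"
begin

definition PP :: "nat \<Rightarrow> nat \<Rightarrow> nat \<Rightarrow> (nat \<times> nat) set" where
  "PP n j c = {(a,i). a < 2^n \<and> odd a \<and> 0 < i \<and> i < 2^j \<and> (i*a) mod 2^n = c}"

lemma PP_finite: "finite (PP n j c)"
  by (rule finite_subset[of _ "{..<2^n} \<times> {..<2^j}"]) (auto simp: PP_def)

lemma card_odd_below: "card {i::nat. i < 2*t \<and> odd i} = t"
proof -
  have "{i::nat. i < 2*t \<and> odd i} = (\<lambda>s. 2*s+1) ` {..<t}"
  proof (rule set_eqI, rule iffI)
    fix x assume "x \<in> {i::nat. i < 2*t \<and> odd i}"
    then have "x < 2*t" "odd x" by auto
    then obtain s where "x = 2*s+1" by (meson oddE)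
    with \<open>x < 2*t\<close> show "x \<in> (\<lambda>s. 2*s+1) ` {..<t}" by auto
  qed auto
  moreover have "inj_on (\<lambda>s::nat. 2*s+1) {..<t}" by (auto simp: inj_on_def)
  ultimately show ?thesis by (simp add: card_image)
qed

lemma odd_mod_pow2: "0 < n \<Longrightarrow> odd ((x::nat) mod 2^n) = odd x"
proof -
  assume "0 < n"
  then have "(2::nat) dvd 2^n" by simp
  then have "x mod 2^n mod 2 = x mod 2" by (rule mod_mod_cancel)
  then show ?thesis by (simp add: odd_iff_mod_2_eq_one)
qed

lemma PP_bound: "j < n \<Longrightarrow> card (PP n j c) * 2 \<le> 2^j"
proof (induction j arbitrary: n c)
  case 0
  have "PP n 0 c = {}" by (auto simp: PP_def)
  then show ?case by simp
next
  case (Suc j)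
  then obtain m where m: "n = Suc m" and jm: "j < m" by (cases n) auto
  show ?case
  proof (cases "odd c")
    case True
    have sub: "PP n (Suc j) c \<subseteq> {(a,i). a < 2^n \<and> odd i \<and> i < 2^Suc j \<and> (i*a) mod 2^n = c}"
    proof
      fix x assume "x \<in> PP n (Suc j) c"
      then obtain a i where x: "x = (a,i)" "a < 2^n" "odd a" "i < 2^Suc j" "(i*a) mod 2^n = c"
        by (auto simp: PP_def)
      have "odd i"
      proof
        assume "even i"
        then have "even (i*a)" by simp
        moreover have "even ((2::nat)^n)" using m by simp
        ultimately have "even ((i*a) mod 2^n)" using m odd_mod_pow2[of n "i*a"] by simp
        with x True show False by simp
      qed
      with x show "x \<in> {(a,i). a < 2^n \<and> odd i \<and> i < 2^Suc j \<and> (i*a) mod 2^n = c}" by auto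
    qed
    have inj: "inj_on snd {(a,i). a < 2^n \<and> odd i \<and> i < 2^Suc j \<and> (i*a) mod 2^n = c}"
    proof (rule inj_onI)
      fix x y assume hx: "x \<in> {(a,i). a < 2^n \<and> odd i \<and> i < 2^Suc j \<and> (i*a) mod 2^n = c}"
        and hy: "y \<in> {(a,i). a < 2^n \<and> odd i \<and> i < 2^Suc j \<and> (i*a) mod 2^n = c}" and e: "snd x = snd y"
      obtain a i where xa: "x = (a,i)" by force
      obtain a' where ya: "y = (a',i)" using e xa by (cases y) auto
      have h: "a < 2^n" "odd i" "(i*a) mod 2^n = c" "a' < 2^n" "(i*a') mod 2^n = c"
        using hx hy xa ya by auto
      have "coprime i (2^n)" using h(2) by simp
      moreover have "[i*a = i*a'] (mod 2^n)" using h by (simp add: cong_def)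
      ultimately have "[a = a'] (mod 2^n)" using cong_mult_lcancel_nat by blast
      then have "a = a'" using h cong_less_modulus_unique_nat by blast
      then show "x = y" using xa ya by simp
    qed
    have "snd ` {(a,i). a < 2^n \<and> odd i \<and> i < 2^Suc j \<and> (i*a) mod 2^n = c} \<subseteq> {i. i < 2*2^j \<and> odd i}"
      by auto
    then have "card (snd ` {(a,i). a < 2^n \<and> odd i \<and> i < 2^Suc j \<and> (i*a) mod 2^n = c}) \<le> card {i::nat. i < 2*2^j \<and> odd i}"
      by (rule card_mono[rotated]) auto
    then have "card (snd ` {(a,i). a < 2^n \<and> odd i \<and> i < 2^Suc j \<and> (i*a) mod 2^n = c}) \<le> 2^j"
      using card_odd_below[of "2^j"] by simp
    then have "card {(a,i). a < 2^n \<and> odd i \<and> i < 2^Suc j \<and> (i*a) mod 2^n = c} \<le> 2^j"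
      using card_image[OF inj] by simp
    moreover have "finite {(a,i). a < 2^n \<and> odd i \<and> i < 2^Suc j \<and> (i*a) mod 2^n = c}"
      by (rule finite_subset[of _ "{..<2^n} \<times> {..<2^Suc j}"]) auto
    ultimately have "card (PP n (Suc j) c) \<le> 2^j" using card_mono[OF _ sub] by linarith
    then show ?thesis by simp
  next
    case False
    define g :: "(nat \<times> nat) \<times> nat \<Rightarrow> nat \<times> nat" where "g = (\<lambda>((a',i'),t). (a' + t*2^m, 2*i'))"
    have sub: "PP n (Suc j) c \<subseteq> g ` (PP m j (c div 2) \<times> {0,1})"
    proof
      fix x assume "x \<in> PP n (Suc j) c"
      then obtain a i where x: "x = (a,i)" "a < 2^n" "odd a" "0 < i" "i < 2^Suc j" "(i*a) mod 2^n = c"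
        by (auto simp: PP_def)
      have "even i"
      proof (rule ccontr)
        assume "odd i"
        then have "odd (i*a)" using x by simp
        moreover have "even ((2::nat)^n)" using m by simp
        ultimately have "odd ((i*a) mod 2^n)" using m odd_mod_pow2[of n "i*a"] by simp
        with x False show False by simp
      qed
      then obtain i' where i': "i = 2*i'" by blast
      have m1: "0 < m" using jm by simp
      have ad: "a div 2^m < 2" using x(2) m by (simp add: less_mult_imp_div_less mult.commute)
      have adm: "a = a mod 2^m + (a div 2^m) * 2^m" by (metis mod_div_mult_eq add.commute)
      have "2 * ((i'*a) mod 2^m) = (2*(i'*a)) mod (2*2^m)" by (simp add: mod_mult_mult1)
      also have "\<dots> = c" using x i' m by (simp add: mult.assoc)
      finally have cc: "(i' * (a mod 2^m)) mod 2^m = c div 2" by (simp add: mod_mult_right_eq)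
      have "odd (a mod 2^m)" using x(3) m1 by (simp add: odd_mod_pow2)
      then have "(a mod 2^m, i') \<in> PP m j (c div 2)" using x i' cc by (auto simp: PP_def)
      moreover have "x = g ((a mod 2^m, i'), a div 2^m)" using x i' adm by (simp add: g_def)
      ultimately show "x \<in> g ` (PP m j (c div 2) \<times> {0,1})" using ad by force
    qed
    have "card (PP n (Suc j) c) \<le> card (g ` (PP m j (c div 2) \<times> {0,1}))"
      by (rule card_mono) (use sub PP_finite in auto)
    also have "\<dots> \<le> card (PP m j (c div 2) \<times> {0::nat,1})" by (rule card_image_le) (simp add: PP_finite)
    also have "\<dots> = 2 * card (PP m j (c div 2))" by (simp add: card_cartesian_product)
    finally show ?thesis using Suc.IH[OF jm, of "c div 2"] by simp
  qed
qed


lemma good_a: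
  fixes C :: "nat set"
  assumes "j < n" "finite C" "card C * 2^j < 2^n"
  shows "\<exists>a<2^n. odd a \<and> (\<forall>i. 0<i \<and> i<2^j \<longrightarrow> (i*a) mod 2^n \<notin> C)"
proof (rule ccontr)
  assume na: "\<not> ?thesis"
  define Bad where "Bad = (\<Union>c\<in>C. PP n j c)"
  have "card Bad \<le> (\<Sum>c\<in>C. card (PP n j c))" unfolding Bad_def by (rule card_UN_le[OF assms(2)])
  then have "2 * card Bad \<le> (\<Sum>c\<in>C. card (PP n j c) * 2)" by (simp add: sum_distrib_right[symmetric])
  also have "\<dots> \<le> (\<Sum>c\<in>C. 2^j)" by (rule sum_mono) (use PP_bound[OF assms(1)] in auto)
  also have "\<dots> = card C * 2^j" by simp
  finally have b1: "2 * card Bad < 2^n" using assms(3) by linarith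
  have fin: "finite Bad" unfolding Bad_def using assms(2) PP_finite by auto
  have "{a::nat. a < 2*2^(n-1) \<and> odd a} \<subseteq> fst ` Bad"
  proof
    fix a :: nat assume "a \<in> {a. a < 2*2^(n-1) \<and> odd a}"
    then have a: "a < 2^n" "odd a" using assms(1)
      by (auto simp del: power_Suc simp add: power_Suc[symmetric])
    then obtain i where "0<i" "i<2^j" "(i*a) mod 2^n \<in> C" using na by blast
    then have "(a,i) \<in> Bad" using a by (auto simp: Bad_def PP_def)
    then show "a \<in> fst ` Bad" by force
  qed
  then have "card {a::nat. a < 2*2^(n-1) \<and> odd a} \<le> card (fst ` Bad)" using fin by (simp add: card_mono)
  also have "\<dots> \<le> card Bad" using fin by (rule card_image_le)
  finally have "2 * 2^(n-1) \<le> 2 * card Bad" using card_odd_below[of "2^(n-1)"] by simp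
  moreover have "(2::nat) * 2^(n-1) = 2^n" using assms(1) by (cases n) auto
  ultimately show False using b1 by linarith
qed

lemma good_b:
  assumes "finite C" "card C * 2^j < 2^n"
  shows "\<exists>b<2^n. \<forall>i<2^j. (b + i*(a::nat)) mod 2^n \<notin> C"
proof (rule ccontr)
  assume nb: "\<not> ?thesis"
  define B where "B = (\<lambda>i. {b. b < 2^n \<and> (b + i*a) mod 2^n \<in> C})"
  have cB: "card (B i) \<le> card C" for i
  proof (rule card_inj_on_le[where f = "\<lambda>b. (b + i*a) mod 2^n"])
    show "inj_on (\<lambda>b. (b + i*a) mod 2^n) (B i)"
    proof (rule inj_onI)
      fix x y assume "x \<in> B i" "y \<in> B i" "(x + i*a) mod 2^n = (y + i*a) mod 2^n"
      then have "[x + i*a = y + i*a] (mod 2^n)" "x < 2^n" "y < 2^n" by (auto simp: cong_def B_def)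
      then show "x = y" using cong_add_rcancel_nat cong_less_modulus_unique_nat by blast
    qed
  qed (use assms(1) in \<open>auto simp: B_def\<close>)
  have "{..<2^n} \<subseteq> (\<Union>i\<in>{..<2^j}. B i)"
    using nb by (auto simp: B_def)
  then have "card {..<(2::nat)^n} \<le> card (\<Union>i\<in>{..<2^j}. B i)"
    by (rule card_mono[rotated]) (auto simp: B_def)
  also have "\<dots> \<le> (\<Sum>i\<in>{..<2^j}. card (B i))" by (rule card_UN_le) simp
  also have "\<dots> \<le> (\<Sum>i\<in>{..<(2::nat)^j}. card C)" by (rule sum_mono) (rule cB)
  also have "\<dots> = card C * 2^j" by simp
  finally show False using assms(2) by simp
qed

lemma sum_rep:
  assumes "I \<subseteq> {..<L}"
  shows "(\<Sum>i\<in>I. (replicate L a @ [b]) ! i) = card I * a"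
proof -
  have "(\<Sum>i\<in>I. (replicate L a @ [b]) ! i) = (\<Sum>i\<in>I. a)"
    by (rule sum.cong) (use assms in \<open>auto simp: nth_append\<close>)
  then show ?thesis by simp
qed

lemma cube_in:
  assumes ha: "\<forall>i. 0<i \<and> i<2^j \<longrightarrow> (i*a) mod 2^n \<in> F"
    and hb: "\<forall>i<2^j. (b + i*a) mod 2^n \<in> F"
  shows "proj_cube n (replicate (2^j-1) a @ [b]) \<subseteq> F"
proof
  fix x assume "x \<in> proj_cube n (replicate (2^j-1) a @ [b])"
  then obtain I where I: "I \<subseteq> {..<2^j}" "I \<noteq> {}"
    and x: "x = (\<Sum>i\<in>I. (replicate (2^j-1) a @ [b]) ! i) mod 2^n"
    by (auto simp: proj_cube_def)
  define L where "L = (2::nat)^j - 1"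
  have L1: "Suc L = 2^j" unfolding L_def by simp
  show "x \<in> F"
  proof (cases "L \<in> I")
    case True
    have fI: "finite I" using I(1) finite_subset by blast
    have sub: "I - {L} \<subseteq> {..<L}" using I(1) L1 by auto
    have "(\<Sum>i\<in>I. (replicate L a @ [b]) ! i) = (replicate L a @ [b]) ! L + (\<Sum>i\<in>I-{L}. (replicate L a @ [b]) ! i)"
      using sum.remove[OF fI True] by simp
    also have "\<dots> = b + card (I-{L}) * a" using sum_rep[OF sub] by (simp add: nth_append)
    finally have e: "x = (b + card (I-{L}) * a) mod 2^n" using x by (simp add: L_def)
    have "card (I-{L}) \<le> L" using card_mono[OF _ sub] by simp
    then show ?thesis using hb e L1 by auto
  next
    case False
    have sub: "I \<subseteq> {..<L}"
    proof
      fix y assume "y \<in> I"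
      then have "y < Suc L" "y \<noteq> L" using I(1) L1 False by auto
      then show "y \<in> {..<L}" by simp
    qed
    have e: "x = (card I * a) mod 2^n" using x sum_rep[OF sub] by (simp add: L_def)
    have "card I \<le> L" using card_mono[OF _ sub] by simp
    moreover have "0 < card I" using I(2) sub finite_subset by (auto simp: card_gt_0_iff)
    ultimately show ?thesis using ha e L1 by auto
  qed
qed


lemma nondvd_layer:
  assumes "\<not> (2::nat)^j dvd x"
  shows "\<exists>i\<in>{1..j}. x mod 2^i = 2^(i-1)"
proof -
  define i where "i = (LEAST i. \<not> (2::nat)^i dvd x)"
  have ni: "\<not> 2^i dvd x" unfolding i_def by (rule LeastI[of _ j]) (rule assms)
  have ij: "i \<le> j" unfolding i_def by (rule Least_le) (rule assms)
  have i0: "i \<noteq> 0" using ni by (metis power_0 one_dvd)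
  have "2^(i-1) dvd x" using not_less_Least[of "i-1" "\<lambda>i. \<not> (2::nat)^i dvd x"] i0 unfolding i_def by auto
  then obtain y where y: "x = 2^(i-1) * y" by blast
  have "odd y"
  proof
    assume "even y"
    then obtain z where "y = 2*z" by blast
    then have "x = 2^i * z" using y i0 by (cases i) auto
    then show False using ni by simp
  qed
  have "x mod 2^i = (2^(i-1) * y) mod (2^(i-1) * 2)" using y i0 by (cases i) (auto simp: mult.commute)
  also have "\<dots> = 2^(i-1) * (y mod 2)" by (rule mod_mult_mult1)
  also have "\<dots> = 2^(i-1)" using \<open>odd y\<close> by (simp add: odd_iff_mod_2_eq_one)
  finally show ?thesis using ij i0 by auto
qed

theorem theorem1p6:
  fixes n k :: nat and F :: "nat set"
  assumes "2 \<le> k" and "k \<le> n"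
    and "F \<subseteq> {..<2^n}"
    and "\<not> contains_proj_cube n (2^(k-1)) F"
  shows "card F \<le> card (\<Union>i\<in>{1..k-1}. layer n i)"
proof (rule ccontr)
  assume big: "\<not> ?thesis"
  define j where "j = k - 1"
  define U where "U = (\<Union>i\<in>{1..k-1}. layer n i)"
  have jn: "j < n" and j1: "1 \<le> j" using assms unfolding j_def by auto
  define M where "M = {x::nat. x < 2^n \<and> 2^j dvd x}"
  have "{..<2^n} - M \<subseteq> U"
  proof
    fix x assume "x \<in> {..<2^n} - M"
    then have x: "x < 2^n" "\<not> 2^j dvd x" by (auto simp: M_def)
    then obtain i where i: "i \<in> {1..j}" "x mod 2^i = 2^(i-1)" using nondvd_layer by blast
    then have "i \<noteq> n+1" using jn by auto
    then have "x \<in> layer n i" using x i by (simp add: layer_def)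
    then show "x \<in> U" using i by (auto simp: U_def j_def)
  qed
  moreover have "U \<subseteq> {..<2^n}"
  proof
    fix x assume "x \<in> U"
    then obtain i where "i \<in> {1..k-1}" "x \<in> layer n i" by (auto simp: U_def)
    moreover then have "i \<noteq> n+1" using assms by auto
    ultimately show "x \<in> {..<2^n}" by (simp add: layer_def)
  qed
  ultimately have cU: "card ({..<2^n} - M) \<le> card U" by (intro card_mono) (auto intro: finite_subset)
  have "M = (\<lambda>y::nat. 2^j*y) ` {..<2^(n-j)}"
  proof (rule set_eqI, rule iffI)
    fix x assume "x \<in> M"
    then obtain y where y: "x = 2^j * y" "x < 2^n" by (auto simp: M_def)
    have "(2::nat)^n = 2^j * 2^(n-j)" using jn by (simp add: power_add[symmetric])
    then have "y < 2^(n-j)" using y by simp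
    then show "x \<in> (\<lambda>y. 2^j*y) ` {..<2^(n-j)}" using y by auto
  next
    fix x :: nat assume "x \<in> (\<lambda>y. 2^j*y) ` {..<2^(n-j)}"
    then obtain y :: nat where y: "x = 2^j * y" "y < 2^(n-j)" by auto
    have e: "(2::nat)^n = 2^j * 2^(n-j)" using jn by (simp add: power_add[symmetric])
    have "x < 2^n" unfolding e y(1) using y(2) by simp
    then show "x \<in> M" using y by (auto simp: M_def)
  qed
  moreover have "inj_on (\<lambda>y::nat. 2^j*y) {..<2^(n-j)}" by (auto simp: inj_on_def)
  ultimately have cM: "card M = 2^(n-j)" by (simp add: card_image)
  have "M \<subseteq> {..<2^n}" by (auto simp: M_def)
  then have "card ({..<2^n} - M) = 2^n - 2^(n-j)" using cM by (simp add: card_Diff_subset finite_subset)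
  then have cF: "2^n - 2^(n-j) < card F" using cU big unfolding U_def by simp
  define C where "C = {..<2^n} - F"
  have fC: "finite C" by (simp add: C_def)
  have "card C = 2^n - card F" unfolding C_def using assms(3) by (simp add: card_Diff_subset finite_subset)
  moreover have "card F \<le> 2^n" using card_mono[OF _ assms(3)] by simp
  moreover have "(2::nat)^(n-j) \<le> 2^n" by (rule power_increasing) auto
  ultimately have "card C < 2^(n-j)" using cF by linarith
  then have "card C * 2^j < 2^(n-j) * 2^j" by simp
  also have "\<dots> = 2^n" using jn by (simp add: power_add[symmetric])
  finally have cC: "card C * 2^j < 2^n" .
  obtain a where a: "a < 2^n" "\<forall>i. 0<i \<and> i<2^j \<longrightarrow> (i*a) mod 2^n \<notin> C"
    using good_a[OF jn fC cC] by blast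
  obtain b where b: "b < 2^n" "\<forall>i<2^j. (b + i*a) mod 2^n \<notin> C"
    using good_b[OF fC cC] by blast
  have ha: "\<forall>i. 0<i \<and> i<2^j \<longrightarrow> (i*a) mod 2^n \<in> F" using a by (auto simp: C_def)
  have hb: "\<forall>i<2^j. (b + i*a) mod 2^n \<in> F" using b by (auto simp: C_def)
  have "contains_proj_cube n (2^(k-1)) F"
    unfolding contains_proj_cube_def
    apply (rule exI[of _ "replicate (2^j-1) a @ [b]"])
    using cube_in[OF ha hb] a b by (auto simp: j_def)
  then show False using assms(4) by simp
qed

end
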